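(* Let $T=(\vec G,G,\prec,A)$ be a twisted graph, simplicial on $F$, with edge set $E=F\sqcup\{x_1,x_2,x_3\}$ where $x_1\prec x_2\prec x_3$, and let $C$ be either $(\{x_1,x_3\},\{x_2\})$ or its opposite $(\{x_2\},\{x_1,x_3\})$. Fix orderings of the rows and columns of $\Sigma(T)$. Then there is a sign $\sigma_C\in\{1,-1\}$ such that, for every $\boldsymbol\theta$ respecting $\prec$, the system of strict inequalities $\widehat a\cdot\mathbf r>0$ ($a\in A$) together with $\widehat C\cdot\mathbf r>0$, in the unknown $\mathbf r\in\mathbb{R}^E$, is soluble if and only if the sign of the determinant of the square submatrix of $\Sigma(T)$ on the columns $F\cup\{x_1\}$ equals $\sigma_C$. Moreover $\sigma_{-C}=-\sigma_C$.
   Context: Signed sets on a finite set $E$: pairs $X=(X^+,X^-)$ of disjoint subsets, $X(e)=+1,-1,0$ according as $e\in X^+$, $e\in X^-$, or neither; support $\underline X=X^+\cup X^-$; $-X=(X^-,X^+)$. Conformal: no $e$ with $X(e)=-Y(e)\ne0$; composition $(X\circ Y)(e)=X(e)$ if $X(e)\ne0$, else $Y(e)$. For a total order $<$ on $E$, $\mathcal C(<)=\{(\{e_1,e_3\},\{e_2\}),(\{e_2\},\{e_1,e_3\}):e_1<e_2<e_3\}$ (circuits of the rank 2 oriented matroid $\mathcal M(<)$; vectors are compositions of pairwise conformal families of circuits); for a partial order $\prec$, $\mathcal C(\prec)=\bigcap_{<\supseteq\prec}\mathcal C(<)$. For a directed graph $\vec G=(V,\vec E)$ (no loops, parallel or antiparallel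 edges), underlying simple graph $G=(V,E)$, a strong map $\mathcal M^*(\vec G)\to\mathcal M(<)$ means every signed minimal cut $(\{(u,w):u\in S,w\notin S\},\{(u,w):w\in S,u\notin S\})$ ($S$, $V\setminus S$ inducing connected subgraphs) is a vector of $\mathcal M(<)$; $C^*_v=(\{(u,v)\in\vec E\},\{(v,u)\in\vec E\})$. A twisted graph $T=(\vec G,G,\prec,A)$: $\prec$ a partial order on $E$, $G$ three-edge-connected, $A\subset\mathcal C(\prec)$, a strong map $\mathcal M^*(\vec G)\to\mathcal M(<)$ for every total $<\supseteq\prec$, and a partition $A=\bigsqcup_v A_v$ with members of $A_v$ pairwise conformal and composing to $C^*_v$. $\boldsymbol\theta\in\mathbb{R}^E$ respects $\prec$ if $0<\theta_e<180$ (degrees) and $\theta_e<\theta_f$ whenever $e\prec f$. For a signed set $c$ with $|\underline c|=3$ whose support elements needed below are $\prec$-comparable, $\widehat c\in\mathbb{R}^E$ has $\widehat c(e)=0$ for $e\notin\underline c$ and $\widehat c(e)=c(e)\sin(\theta_{e''}-\theta_{e'})$ if $\underline c=\{e,e',e''\}$ with $e'\prec e''$; $\Sigma(T)$ is the $|A|\times|E|$ matrix with rows $\widehat a$, $a\in A$. A matrix with $r+1$ rows and $r$ columns is a simplex if its rows have a linear dependency with all coefficients positive and every row dependency is a multiple of it. $T$ is simplicial on $F$ if for every $\boldsymbol\theta$ respecting $\prec$ the submatrix of $\Sigma(T)$ on columns $F$ is a simplex (so $|F|=|A|-1$ and the submatrix on $F\cup\{x_1\}$ is square). *)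

theory Defs
  imports Complex_Main "Jordan_Normal_Form.Determinant"
begin

type_synonym 'e sset = "'e set \<times> 'e set"

definition sval :: "'e sset \<Rightarrow> 'e \<Rightarrow> real" where
  "sval X e = (if e \<in> fst X then 1 else if e \<in> snd X then -1 else 0)"

definition supp :: "'e sset \<Rightarrow> 'e set" where
  "supp X = fst X \<union> snd X"

definition sneg :: "'e sset \<Rightarrow> 'e sset" where
  "sneg X = (snd X, fst X)"

definition conformal :: "'e sset \<Rightarrow> 'e sset \<Rightarrow> bool" where
  "conformal X Y \<longleftrightarrow> \<not> (\<exists>e. sval X e = - sval Y e \<and> sval X e \<noteq> 0)"

definition scomp :: "'e sset \<Rightarrow> 'e sset \<Rightarrow> 'e sset" where
  "scomp X Y = ({e. sval X e = 1 \<or> (sval X e = 0 \<and> sval Y e = 1)},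
                {e. sval X e = -1 \<or> (sval X e = 0 \<and> sval Y e = -1)})"

definition composes_to :: "'e sset set \<Rightarrow> 'e sset \<Rightarrow> bool" where
  "composes_to S X \<longleftrightarrow> (\<exists>l. distinct l \<and> set l = S \<and> foldr scomp l ({}, {}) = X)"

definition strict_partial_order_on :: "'e set \<Rightarrow> ('e \<Rightarrow> 'e \<Rightarrow> bool) \<Rightarrow> bool" where
  "strict_partial_order_on E r \<longleftrightarrow>
     (\<forall>e\<in>E. \<not> r e e) \<and> (\<forall>e\<in>E. \<forall>f\<in>E. \<forall>g\<in>E. r e f \<longrightarrow> r f g \<longrightarrow> r e g)"

definition strict_total_order_on :: "'e set \<Rightarrow> ('e \<Rightarrow> 'e \<Rightarrow> bool) \<Rightarrow> bool" where
  "strict_total_order_on E r \<longleftrightarrow> strict_partial_order_on E r \<and>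
     (\<forall>e\<in>E. \<forall>f\<in>E. e \<noteq> f \<longrightarrow> r e f \<or> r f e)"

definition total_ext :: "'e set \<Rightarrow> ('e \<Rightarrow> 'e \<Rightarrow> bool) \<Rightarrow> ('e \<Rightarrow> 'e \<Rightarrow> bool) \<Rightarrow> bool" where
  "total_ext E prec lt \<longleftrightarrow> strict_total_order_on E lt \<and>
     (\<forall>e\<in>E. \<forall>f\<in>E. prec e f \<longrightarrow> lt e f)"

definition circuits_tot :: "'e set \<Rightarrow> ('e \<Rightarrow> 'e \<Rightarrow> bool) \<Rightarrow> 'e sset set" where
  "circuits_tot E lt = {c. \<exists>e1\<in>E. \<exists>e2\<in>E. \<exists>e3\<in>E. lt e1 e2 \<and> lt e2 e3 \<and>
       (c = ({e1, e3}, {e2}) \<or> c = ({e2}, {e1, e3}))}"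

definition circuits_po :: "'e set \<Rightarrow> ('e \<Rightarrow> 'e \<Rightarrow> bool) \<Rightarrow> 'e sset set" where
  "circuits_po E prec = {c. \<forall>lt. total_ext E prec lt \<longrightarrow> c \<in> circuits_tot E lt}"

definition is_vector :: "'e set \<Rightarrow> ('e \<Rightarrow> 'e \<Rightarrow> bool) \<Rightarrow> 'e sset \<Rightarrow> bool" where
  "is_vector E lt X \<longleftrightarrow> (\<exists>S. finite S \<and> S \<subseteq> circuits_tot E lt \<and>
       (\<forall>c\<in>S. \<forall>d\<in>S. conformal c d) \<and> composes_to S X)"

text \<open>Directed graph (V, Ed): no loops, no parallel or antiparallel edges. Its edge set
  Ed is also the edge set E of the underlying simple graph G.\<close>
definition digraph :: "'v set \<Rightarrow> ('v \<times> 'v) set \<Rightarrow> bool" where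
  "digraph V Ed \<longleftrightarrow> finite V \<and> Ed \<subseteq> V \<times> V \<and> (\<forall>v. (v, v) \<notin> Ed) \<and>
     (\<forall>u w. (u, w) \<in> Ed \<longrightarrow> (w, u) \<notin> Ed)"

definition induced_connected :: "('v \<times> 'v) set \<Rightarrow> 'v set \<Rightarrow> bool" where
  "induced_connected Ed S \<longleftrightarrow> S \<noteq> {} \<and>
     (\<forall>u\<in>S. \<forall>w\<in>S. (u, w) \<in> ({(x, y). x \<in> S \<and> y \<in> S \<and> ((x, y) \<in> Ed \<or> (y, x) \<in> Ed)})\<^sup>*)"

definition three_edge_connected :: "'v set \<Rightarrow> ('v \<times> 'v) set \<Rightarrow> bool" where
  "three_edge_connected V Ed \<longleftrightarrow> card V \<ge> 2 \<and>
     (\<forall>X. X \<subseteq> Ed \<longrightarrow> card X < 3 \<longrightarrow> induced_connected (Ed - X) V)"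

definition signed_cut :: "('v \<times> 'v) set \<Rightarrow> 'v set \<Rightarrow> ('v \<times> 'v) sset" where
  "signed_cut Ed S = ({(u, w). (u, w) \<in> Ed \<and> u \<in> S \<and> w \<notin> S},
                      {(u, w). (u, w) \<in> Ed \<and> w \<in> S \<and> u \<notin> S})"

definition vertex_cocircuit :: "('v \<times> 'v) set \<Rightarrow> 'v \<Rightarrow> ('v \<times> 'v) sset" where
  "vertex_cocircuit Ed v = ({(u, w). (u, w) \<in> Ed \<and> w = v}, {(u, w). (u, w) \<in> Ed \<and> u = v})"

text \<open>Strong map M*(G) -> M(<): every signed minimal cut is a vector of M(<).\<close>
definition strong_map :: "'v set \<Rightarrow> ('v \<times> 'v) set \<Rightarrow> (('v \<times> 'v) \<Rightarrow> ('v \<times> 'v) \<Rightarrow> bool) \<Rightarrow> bool" where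
  "strong_map V Ed lt \<longleftrightarrow> (\<forall>S. S \<subseteq> V \<longrightarrow> induced_connected Ed S \<longrightarrow>
       induced_connected Ed (V - S) \<longrightarrow> is_vector Ed lt (signed_cut Ed S))"

definition twisted_graph ::
  "'v set \<Rightarrow> ('v \<times> 'v) set \<Rightarrow> (('v \<times> 'v) \<Rightarrow> ('v \<times> 'v) \<Rightarrow> bool) \<Rightarrow> ('v \<times> 'v) sset set \<Rightarrow> bool" where
  "twisted_graph V Ed prec A \<longleftrightarrow>
     digraph V Ed \<and> strict_partial_order_on Ed prec \<and> three_edge_connected V Ed \<and>
     A \<subseteq> circuits_po Ed prec \<and>
     (\<forall>lt. total_ext Ed prec lt \<longrightarrow> strong_map V Ed lt) \<and>
     (\<exists>part :: ('v \<times> 'v) sset \<Rightarrow> 'v. (\<forall>a\<in>A. part a \<in> V) \<and>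
        (\<forall>v\<in>V. (\<forall>a\<in>A. \<forall>b\<in>A. part a = v \<longrightarrow> part b = v \<longrightarrow> conformal a b) \<and>
                 composes_to {a\<in>A. part a = v} (vertex_cocircuit Ed v)))"

definition respects_po :: "'e set \<Rightarrow> ('e \<Rightarrow> 'e \<Rightarrow> bool) \<Rightarrow> ('e \<Rightarrow> real) \<Rightarrow> bool" where
  "respects_po E prec \<theta> \<longleftrightarrow> (\<forall>e\<in>E. 0 < \<theta> e \<and> \<theta> e < 180) \<and>
     (\<forall>e\<in>E. \<forall>f\<in>E. prec e f \<longrightarrow> \<theta> e < \<theta> f)"

definition sin_deg :: "real \<Rightarrow> real" where
  "sin_deg x = sin (x * pi / 180)"

definition shat :: "('e \<Rightarrow> 'e \<Rightarrow> bool) \<Rightarrow> ('e \<Rightarrow> real) \<Rightarrow> 'e sset \<Rightarrow> 'e \<Rightarrow> real" where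
  "shat prec \<theta> c e = (if e \<in> supp c then
      sval c e * (THE s. \<exists>e' e''. supp c = {e, e', e''} \<and> e' \<noteq> e \<and> e'' \<noteq> e \<and> prec e' e'' \<and>
                                 s = sin_deg (\<theta> e'' - \<theta> e'))
    else 0)"

definition dotE :: "'e set \<Rightarrow> ('e \<Rightarrow> real) \<Rightarrow> ('e \<Rightarrow> real) \<Rightarrow> real" where
  "dotE E u r = (\<Sum>e\<in>E. u e * r e)"

definition is_simplex :: "'r set \<Rightarrow> 'c set \<Rightarrow> ('r \<Rightarrow> 'c \<Rightarrow> real) \<Rightarrow> bool" where
  "is_simplex R K M \<longleftrightarrow> finite R \<and> finite K \<and> card R = card K + 1 \<and>
     (\<exists>lam. (\<forall>a\<in>R. lam a > 0) \<and> (\<forall>k\<in>K. (\<Sum>a\<in>R. lam a * M a k) = 0) \<and>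
          (\<forall>\<mu>. (\<forall>k\<in>K. (\<Sum>a\<in>R. \<mu> a * M a k) = 0) \<longrightarrow> (\<exists>t. \<forall>a\<in>R. \<mu> a = t * lam a)))"

definition simplicial_on ::
  "'e set \<Rightarrow> ('e \<Rightarrow> 'e \<Rightarrow> bool) \<Rightarrow> 'e sset set \<Rightarrow> 'e set \<Rightarrow> bool" where
  "simplicial_on E prec A F \<longleftrightarrow>
     (\<forall>\<theta>. respects_po E prec \<theta> \<longrightarrow> is_simplex A F (\<lambda>a e. shat prec \<theta> a e))"

definition sigma_sub ::
  "('e \<Rightarrow> 'e \<Rightarrow> bool) \<Rightarrow> ('e \<Rightarrow> real) \<Rightarrow> 'e sset list \<Rightarrow> 'e list \<Rightarrow> 'e set \<Rightarrow> real mat" where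
  "sigma_sub prec \<theta> rs cs K =
     (let ks = filter (\<lambda>e. e \<in> K) cs in
      mat (length rs) (length ks) (\<lambda>(i, j). shat prec \<theta> (rs ! i) (ks ! j)))"

end

theory Submission
  imports Defs
begin


lemma core_entry:
  fixes M :: "real mat"
  assumes M: "M \<in> carrier_mat n n" and j: "j < n" and k: "k < n"
  shows "(\<Sum>i<n. cofactor M i j * M$$(i,k)) = (if k = j then det M else 0)"
proof -
  have "(adj_mat M * M) $$ (j,k) = (det M \<cdot>\<^sub>m 1\<^sub>m n) $$ (j,k)"
    using adj_mat(3)[OF M] by simp
  moreover have "(adj_mat M * M) $$ (j,k) = (\<Sum>i<n. cofactor M i j * M$$(i,k))"
    using M j k by (auto simp: index_mult_mat scalar_prod_def adj_mat_def atLeast0LessThan intro!: sum.cong)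
  moreover have "(det M \<cdot>\<^sub>m 1\<^sub>m n) $$ (j,k) = (if k = j then det M else 0)"
    using j k by auto
  ultimately show ?thesis by simp
qed

lemma core_entry2:
  fixes M :: "real mat"
  assumes M: "M \<in> carrier_mat n n" and i: "i < n" and l: "l < n"
  shows "(\<Sum>k<n. M$$(i,k) * cofactor M l k) = (if i = l then det M else 0)"
proof -
  have "(M * adj_mat M) $$ (i,l) = (det M \<cdot>\<^sub>m 1\<^sub>m n) $$ (i,l)"
    using adj_mat(2)[OF M] by simp
  moreover have "(M * adj_mat M) $$ (i,l) = (\<Sum>k<n. M$$(i,k) * cofactor M l k)"
    using M i l by (auto simp: index_mult_mat scalar_prod_def adj_mat_def atLeast0LessThan intro!: sum.cong)
  moreover have "(det M \<cdot>\<^sub>m 1\<^sub>m n) $$ (i,l) = (if i = l then det M else 0)"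
    using i l by auto
  ultimately show ?thesis by simp
qed

lemma core:
  fixes M :: "real mat" and lam :: "nat \<Rightarrow> real"
  assumes M: "M \<in> carrier_mat (Suc m) (Suc m)" and j: "j < Suc m"
  and L1: "\<forall>i<Suc m. lam i > 0"
  and L2: "\<forall>k<Suc m. k \<noteq> j \<longrightarrow> (\<Sum>i<Suc m. lam i * M$$(i,k)) = 0"
  and L3: "\<forall>\<mu>. (\<forall>k<Suc m. k\<noteq>j \<longrightarrow> (\<Sum>i<Suc m. \<mu> i * M$$(i,k)) = 0) \<longrightarrow> (\<exists>c. \<forall>i<Suc m. \<mu> i = c * lam i)"
  shows core_a: "det (mat_delete M 0 j) \<noteq> 0"
   and core_b: "det M = cofactor M 0 j * (\<Sum>i<Suc m. lam i * M$$(i,j)) / lam 0"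
   and core_c: "(\<Sum>i<Suc m. lam i * M$$(i,j)) \<noteq> 0 \<Longrightarrow> \<exists>v. \<forall>i<Suc m. (\<Sum>k<Suc m. M$$(i,k) * v k) = 1"
proof -
  let ?n = "Suc m"
  let ?W = "(\<Sum>i<Suc m. lam i * M$$(i,j))"
  show A: "det (mat_delete M 0 j) \<noteq> 0"
  proof
    assume d0: "det (mat_delete M 0 j) = 0"
    define D where "D = mat_delete M 0 j"
    have D: "D \<in> carrier_mat m m" using mat_delete_carrier[OF M] unfolding D_def by simp
    have DT: "D\<^sup>T \<in> carrier_mat m m" using D by simp
    have "det (D\<^sup>T) = 0" using d0 det_transpose[OF D] unfolding D_def by simp
    then obtain v where v: "v \<in> carrier_vec m" "v \<noteq> 0\<^sub>v m" "D\<^sup>T *\<^sub>v v = 0\<^sub>v m"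
      using det_0_iff_vec_prod_zero_field[OF DT] by blast
    define \<mu> where "\<mu> i = (if i = 0 then 0 else v $ (i - 1))" for i
    have "\<forall>k<?n. k\<noteq>j \<longrightarrow> (\<Sum>i<?n. \<mu> i * M$$(i,k)) = 0"
    proof (intro allI impI)
      fix k assume k: "k < ?n" "k \<noteq> j"
      define k' where "k' = (if k < j then k else k - 1)"
      have k': "k' < m" using k j unfolding k'_def by auto
      have kk: "(if k' < j then k' else Suc k') = k" using k unfolding k'_def by auto
      have "(D\<^sup>T *\<^sub>v v) $ k' = 0" using v(3) k' by simp
      moreover have "(D\<^sup>T *\<^sub>v v) $ k' = (\<Sum>i<m. v $ i * M$$(Suc i, k))"
        using k' D v(1) kk M unfolding D_def
        by (auto simp: mult_mat_vec_def scalar_prod_def mat_delete_def atLeast0LessThan mult.commute intro!: sum.cong)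
      moreover have "(\<Sum>i<?n. \<mu> i * M$$(i,k)) = (\<Sum>i<m. v $ i * M$$(Suc i, k))"
        by (subst sum.lessThan_Suc_shift) (simp add: \<mu>_def)
      ultimately show "(\<Sum>i<?n. \<mu> i * M$$(i,k)) = 0" by simp
    qed
    then obtain c where c: "\<forall>i<?n. \<mu> i = c * lam i" using L3 by blast
    have "c = 0" using c[rule_format, of 0] L1[rule_format, of 0] by (simp add: \<mu>_def)
    hence "v = 0\<^sub>v m"
      using c v(1) by (intro eq_vecI) (auto simp: \<mu>_def dest: spec[of _ "Suc _"])
    thus False using v(2) by simp
  qed
  obtain c where c: "\<forall>i<?n. cofactor M i j = c * lam i"
    using L3[rule_format, of "\<lambda>i. cofactor M i j"] core_entry[OF M j] by auto
  have "det M = (\<Sum>i<?n. cofactor M i j * M$$(i,j))" using core_entry[OF M j j] by simp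
  also have "\<dots> = c * ?W" using c by (simp add: sum_distrib_left mult.assoc del: sum.lessThan_Suc)
  finally have dM: "det M = c * ?W" .
  have c0: "c = cofactor M 0 j / lam 0" using c[rule_format, of 0] L1 by auto
  show B: "det M = cofactor M 0 j * ?W / lam 0" using dM c0 by simp
  assume W: "?W \<noteq> 0"
  have "cofactor M 0 j \<noteq> 0" using A unfolding cofactor_def by simp
  hence dn: "det M \<noteq> 0" using B W L1 by auto
  define v where "v k = (\<Sum>l<?n. cofactor M l k) / det M" for k
  show "\<exists>v. \<forall>i<Suc m. (\<Sum>k<Suc m. M$$(i,k) * v k) = 1"
  proof (intro exI allI impI)
    fix i assume i: "i < ?n"
    have "(\<Sum>k<?n. M$$(i,k) * v k) = (\<Sum>l<?n. (\<Sum>k<?n. M$$(i,k) * cofactor M l k)) / det M"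
    proof -
      have "(\<Sum>k<?n. M$$(i,k) * v k) = (\<Sum>k<?n. \<Sum>l<?n. M$$(i,k) * cofactor M l k) / det M"
        unfolding v_def by (simp add: sum_divide_distrib sum_distrib_left del: sum.lessThan_Suc)
      also have "\<dots> = (\<Sum>l<?n. \<Sum>k<?n. M$$(i,k) * cofactor M l k) / det M"
        by (subst sum.swap) (rule refl)
      finally show ?thesis .
    qed
    also have "\<dots> = (\<Sum>l<?n. (if i = l then det M else 0)) / det M"
      using core_entry2[OF M i] by simp
    also have "\<dots> = 1" using i dn by simp
    finally show "(\<Sum>k<?n. M$$(i,k) * v k) = 1" .
  qed
qed



lemma det_mat_expand:
  "det (mat n n g) = (\<Sum>p\<in>{p. p permutes {0..<n}}. signof p * (\<Prod>i=0..<n. g (i, p i)))"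
  by (subst det_def') (auto intro!: sum.cong prod.cong simp: permutes_in_image)

lemma continuous_det:
  assumes "\<And>i k. i < n \<Longrightarrow> k < n \<Longrightarrow> continuous_on S (\<lambda>s. f s (i,k))"
  shows "continuous_on S (\<lambda>s. det (mat n n (f s)) :: real)"
  unfolding det_mat_expand
  by (intro continuous_on_sum continuous_on_mult continuous_on_const continuous_on_prod)
     (auto intro!: assms simp: permutes_in_image)

lemma trig1: "sin (c - b) * cos a - sin (c - a) * cos b + sin (b - a) * cos c = (0::real)"
  by (simp add: sin_diff cos_diff algebra_simps)
lemma trig2: "sin (c - b) * sin a - sin (c - a) * sin b + sin (b - a) * sin c = (0::real)"
  by (simp add: sin_diff cos_diff algebra_simps)

lemma spo_asym: "strict_partial_order_on E r \<Longrightarrow> e\<in>E \<Longrightarrow> f\<in>E \<Longrightarrow> r e f \<Longrightarrow> \<not> r f e"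
  unfolding strict_partial_order_on_def by blast

lemma the_pair:
  assumes "e \<noteq> b" "e \<noteq> c" "b \<noteq> c" "X = {e,b,c}" "r b c" "\<not> r c b"
  shows "(THE s. \<exists>e' e''. X = {e, e', e''} \<and> e' \<noteq> e \<and> e'' \<noteq> e \<and> r e' e'' \<and> s = g e' e'') = g b c"
proof (rule the_equality)
  show "\<exists>e' e''. X = {e, e', e''} \<and> e' \<noteq> e \<and> e'' \<noteq> e \<and> r e' e'' \<and> g b c = g e' e''"
    by (rule exI[of _ b], rule exI[of _ c]) (simp add: assms not_sym[OF assms(1)] not_sym[OF assms(2)])
next
  fix s assume "\<exists>e' e''. X = {e, e', e''} \<and> e' \<noteq> e \<and> e'' \<noteq> e \<and> r e' e'' \<and> s = g e' e''"
  then obtain e' e'' where h0: "X = {e, e', e''}" and h: "e' \<noteq> e" "e'' \<noteq> e" "r e' e''" "s = g e' e''"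
    by blast
  have h1: "{e,b,c} = {e, e', e''}" using h0 assms(4) by simp
  have m1: "e' \<in> {e,b,c}" "e'' \<in> {e,b,c}" by (simp_all add: h1)
  have m2: "b \<in> {e,e',e''}" "c \<in> {e,e',e''}" by (simp_all add: h1[symmetric])
  have a1: "e' = b \<or> e' = c" using m1(1) h(1) by simp
  have a2: "e'' = b \<or> e'' = c" using m1(2) h(2) by simp
  have a3: "b = e' \<or> b = e''" using m2(1) assms(1) by simp
  have a4: "c = e' \<or> c = e''" using m2(2) assms(2) by simp
  have "e' = b \<and> e'' = c"
  proof (cases "e' = b")
    case True
    then show ?thesis using a2 a4 assms(3) by metis
  next
    case False
    then have "e' = c" using a1 by simp
    moreover have "e'' = b" using a3 False by metis
    ultimately show ?thesis using h(3) assms(6) by simp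
  qed
  thus "s = g b c" using h(4) by simp
qed

definition circ_val :: "('e \<Rightarrow> real) \<Rightarrow> 'e \<Rightarrow> 'e \<Rightarrow> 'e \<Rightarrow> 'e \<Rightarrow> real" where
  "circ_val \<theta> e1 e2 e3 e = (if e = e1 then sin_deg (\<theta> e3 - \<theta> e2) else if e = e2 then - sin_deg (\<theta> e3 - \<theta> e1)
      else if e = e3 then sin_deg (\<theta> e2 - \<theta> e1) else 0)"

lemma shat_circ:
  assumes spo: "strict_partial_order_on Ed prec" and es: "e1 \<in> Ed" "e2 \<in> Ed" "e3 \<in> Ed"
    and p: "prec e1 e2" "prec e2 e3"
  shows "shat prec \<theta> ({e1,e3},{e2}) = circ_val \<theta> e1 e2 e3"
    and "shat prec \<theta> ({e2},{e1,e3}) = (\<lambda>e. - circ_val \<theta> e1 e2 e3 e)"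
proof -
  have irr: "\<And>e. e \<in> Ed \<Longrightarrow> \<not> prec e e" using spo unfolding strict_partial_order_on_def by blast
  have tr: "prec e1 e2 \<Longrightarrow> prec e2 e3 \<Longrightarrow> prec e1 e3" using spo es unfolding strict_partial_order_on_def by blast
  have p13: "prec e1 e3" using tr p by blast
  have d: "e1 \<noteq> e2" "e2 \<noteq> e3" "e1 \<noteq> e3" using irr es p p13 by metis+
  have n: "\<not> prec e2 e1" "\<not> prec e3 e2" "\<not> prec e3 e1" using spo_asym[OF spo] es p p13 by auto
  note T1 = the_pair[of e1 e2 e3 "{e1,e2,e3}" prec "\<lambda>e' e''. sin_deg (\<theta> e'' - \<theta> e')"]
  note T2 = the_pair[of e2 e1 e3 "{e1,e2,e3}" prec "\<lambda>e' e''. sin_deg (\<theta> e'' - \<theta> e')"]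
  note T3 = the_pair[of e3 e1 e2 "{e1,e2,e3}" prec "\<lambda>e' e''. sin_deg (\<theta> e'' - \<theta> e')"]
  have T1': "(THE s. \<exists>e' e''. {e1,e2,e3} = {e1, e', e''} \<and> e' \<noteq> e1 \<and> e'' \<noteq> e1 \<and> prec e' e'' \<and> s = sin_deg (\<theta> e'' - \<theta> e')) = sin_deg (\<theta> e3 - \<theta> e2)"
    by (rule T1[OF d(1) d(3) d(2) refl p(2) n(2)])
  have T2': "(THE s. \<exists>e' e''. {e1,e2,e3} = {e2, e', e''} \<and> e' \<noteq> e2 \<and> e'' \<noteq> e2 \<and> prec e' e'' \<and> s = sin_deg (\<theta> e'' - \<theta> e')) = sin_deg (\<theta> e3 - \<theta> e1)"
    by (rule T2[OF not_sym[OF d(1)] d(2) d(3) _ p13 n(3)]) auto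
  have T3': "(THE s. \<exists>e' e''. {e1,e2,e3} = {e3, e', e''} \<and> e' \<noteq> e3 \<and> e'' \<noteq> e3 \<and> prec e' e'' \<and> s = sin_deg (\<theta> e'' - \<theta> e')) = sin_deg (\<theta> e2 - \<theta> e1)"
    by (rule T3[OF not_sym[OF d(3)] not_sym[OF d(2)] d(1) _ p(1) n(1)]) auto
  have s1: "supp ({e1,e3},{e2}) = {e1,e2,e3}" "supp ({e2},{e1,e3}) = {e1,e2,e3}" unfolding supp_def by auto
  show "shat prec \<theta> ({e1,e3},{e2}) = circ_val \<theta> e1 e2 e3"
  proof
    fix e
    show "shat prec \<theta> ({e1,e3},{e2}) e = circ_val \<theta> e1 e2 e3 e"
      unfolding shat_def s1 circ_val_def using d T1' T2' T3'
      by (cases "e = e1"; cases "e = e2"; cases "e = e3") (auto simp: sval_def)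
  qed
  show "shat prec \<theta> ({e2},{e1,e3}) = (\<lambda>e. - circ_val \<theta> e1 e2 e3 e)"
  proof
    fix e
    show "shat prec \<theta> ({e2},{e1,e3}) e = - circ_val \<theta> e1 e2 e3 e"
      unfolding shat_def s1 circ_val_def using d T1' T2' T3'
      by (cases "e = e1"; cases "e = e2"; cases "e = e3") (auto simp: sval_def)
  qed
qed

lemma circ_kern:
  assumes fin: "finite Ed" and es: "e1 \<in> Ed" "e2 \<in> Ed" "e3 \<in> Ed" and d: "e1 \<noteq> e2" "e2 \<noteq> e3" "e1 \<noteq> e3"
  shows "(\<Sum>e\<in>Ed. circ_val \<theta> e1 e2 e3 e * cos (\<theta> e * pi / 180)) = 0"
    and "(\<Sum>e\<in>Ed. circ_val \<theta> e1 e2 e3 e * sin (\<theta> e * pi / 180)) = 0"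
proof -
  have sd: "sin_deg (x - y) = sin (x * pi / 180 - y * pi / 180)" for x y
    unfolding sin_deg_def by (simp add: left_diff_distrib diff_divide_distrib)
  have "(\<Sum>e\<in>Ed. circ_val \<theta> e1 e2 e3 e * cos (\<theta> e * pi / 180)) = (\<Sum>e\<in>{e1,e2,e3}. circ_val \<theta> e1 e2 e3 e * cos (\<theta> e * pi / 180))"
    using fin es by (intro sum.mono_neutral_right) (auto simp: circ_val_def)
  also have "\<dots> = 0" apply (simp add: circ_val_def sd d not_sym[OF d(1)] not_sym[OF d(2)] not_sym[OF d(3)])
    using trig1[of "\<theta> e3 * pi / 180" "\<theta> e2 * pi / 180" "\<theta> e1 * pi / 180"] by linarith
  finally show "(\<Sum>e\<in>Ed. circ_val \<theta> e1 e2 e3 e * cos (\<theta> e * pi / 180)) = 0" .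
  have "(\<Sum>e\<in>Ed. circ_val \<theta> e1 e2 e3 e * sin (\<theta> e * pi / 180)) = (\<Sum>e\<in>{e1,e2,e3}. circ_val \<theta> e1 e2 e3 e * sin (\<theta> e * pi / 180))"
    using fin es by (intro sum.mono_neutral_right) (auto simp: circ_val_def)
  also have "\<dots> = 0" apply (simp add: circ_val_def sd d not_sym[OF d(1)] not_sym[OF d(2)] not_sym[OF d(3)])
    using trig2[of "\<theta> e3 * pi / 180" "\<theta> e2 * pi / 180" "\<theta> e1 * pi / 180"] by linarith
  finally show "(\<Sum>e\<in>Ed. circ_val \<theta> e1 e2 e3 e * sin (\<theta> e * pi / 180)) = 0" .
qed



lemma ex_total_ext:
  assumes fin: "finite E" and spo: "strict_partial_order_on E prec"
  shows "\<exists>lt. total_ext E prec lt"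
proof -
  obtain g :: "'a \<Rightarrow> nat" and n where g: "inj_on g E"
    using finite_imp_inj_to_nat_seg[OF fin] by blast
  define h where "h e = card {x\<in>E. prec x e}" for e
  define lt where "lt e f \<longleftrightarrow> h e < h f \<or> (h e = h f \<and> g e < g f)" for e f
  have irr: "\<And>e. e \<in> E \<Longrightarrow> \<not> prec e e" and tr: "\<And>e f k. e\<in>E \<Longrightarrow> f\<in>E \<Longrightarrow> k\<in>E \<Longrightarrow> prec e f \<Longrightarrow> prec f k \<Longrightarrow> prec e k"
    using spo unfolding strict_partial_order_on_def by blast+
  have hmono: "h e < h f" if ef: "e \<in> E" "f \<in> E" "prec e f" for e f
  proof -
    have "{x\<in>E. prec x e} \<subset> {x\<in>E. prec x f}"
    proof
      show "{x\<in>E. prec x e} \<subseteq> {x\<in>E. prec x f}" using tr ef by blast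
      show "{x\<in>E. prec x e} \<noteq> {x\<in>E. prec x f}" using ef irr by blast
    qed
    thus ?thesis unfolding h_def by (intro psubset_card_mono) (use fin in auto)
  qed
  have "total_ext E prec lt"
    unfolding total_ext_def strict_total_order_on_def strict_partial_order_on_def
  proof (intro conjI ballI impI)
    fix e assume "e \<in> E" thus "\<not> lt e e" unfolding lt_def by simp
  next
    fix e f k assume "lt e f" "lt f k" thus "lt e k" unfolding lt_def by auto
  next
    fix e f assume "e \<in> E" "f \<in> E" "e \<noteq> f"
    hence "g e \<noteq> g f" using g unfolding inj_on_def by blast
    thus "lt e f \<or> lt f e" unfolding lt_def by auto
  next
    fix e f assume "e \<in> E" "f \<in> E" "prec e f" thus "lt e f" unfolding lt_def using hmono by blast
  qed
  thus ?thesis by blast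
qed

lemma shape:
  assumes fin: "finite Ed" and spo: "strict_partial_order_on Ed prec"
    and a: "a \<in> circuits_po Ed prec"
    and wd: "\<forall>e\<in>supp a. \<forall>f\<in>supp a. e \<noteq> f \<longrightarrow> prec e f \<or> prec f e"
  shows "\<exists>e1 e2 e3. e1\<in>Ed \<and> e2\<in>Ed \<and> e3\<in>Ed \<and> prec e1 e2 \<and> prec e2 e3 \<and>
           (a = ({e1,e3},{e2}) \<or> a = ({e2},{e1,e3}))"
proof -
  obtain lt where lt: "total_ext Ed prec lt" using ex_total_ext[OF fin spo] by blast
  hence "a \<in> circuits_tot Ed lt" using a unfolding circuits_po_def by blast
  then obtain e1 e2 e3 where es: "e1\<in>Ed" "e2\<in>Ed" "e3\<in>Ed" and l: "lt e1 e2" "lt e2 e3"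
    and af: "a = ({e1,e3},{e2}) \<or> a = ({e2},{e1,e3})"
    unfolding circuits_tot_def by blast
  have irr: "\<And>e. e \<in> Ed \<Longrightarrow> \<not> lt e e" and tr: "\<And>e f k. e\<in>Ed \<Longrightarrow> f\<in>Ed \<Longrightarrow> k\<in>Ed \<Longrightarrow> lt e f \<Longrightarrow> lt f k \<Longrightarrow> lt e k"
    and ext: "\<And>e f. e\<in>Ed \<Longrightarrow> f\<in>Ed \<Longrightarrow> prec e f \<Longrightarrow> lt e f"
    using lt unfolding total_ext_def strict_total_order_on_def strict_partial_order_on_def by blast+
  have s: "supp a = {e1,e2,e3}" using af unfolding supp_def by auto
  have d: "e1 \<noteq> e2" "e2 \<noteq> e3" using l irr es by auto
  have "prec e1 e2 \<or> prec e2 e1" using wd s d by auto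
  moreover have "\<not> prec e2 e1" using ext[of e2 e1] tr[of e1 e2 e1] irr[of e1] es l by blast
  ultimately have p1: "prec e1 e2" by blast
  have "prec e2 e3 \<or> prec e3 e2" using wd s d by auto
  moreover have "\<not> prec e3 e2" using ext[of e3 e2] tr[of e2 e3 e2] irr[of e2] es l by blast
  ultimately have p2: "prec e2 e3" by blast
  show ?thesis using es p1 p2 af by blast
qed



lemma sum_list_idx: "distinct xs \<Longrightarrow> (\<Sum>a\<in>set xs. g a) = (\<Sum>i<length xs. g (xs!i))"
  by (simp add: sum.distinct_set_conv_list sum_list_sum_nth atLeast0LessThan)

lemma sum_ind: assumes "distinct xs" "i0 < length xs"
  shows "(\<Sum>i<length xs. if xs!i = xs!i0 then \<mu> i else 0) = (\<mu> i0 :: real)"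
proof -
  have "(\<Sum>i<length xs. if xs!i = xs!i0 then \<mu> i else 0) = (\<Sum>i<length xs. if i = i0 then \<mu> i else 0)"
    using assms by (intro sum.cong) (auto simp: nth_eq_iff_index_eq)
  also have "\<dots> = \<mu> i0" using assms(2) by simp
  finally show ?thesis .
qed

lemma three_pts:
  fixes u :: "'e \<Rightarrow> real" and \<phi> :: "'e \<Rightarrow> real"
  assumes fin: "finite Ed" and xs: "x1\<in>Ed" "x2\<in>Ed" "x3\<in>Ed" and d: "x1\<noteq>x2" "x2\<noteq>x3" "x1\<noteq>x3"
  and z: "\<forall>e\<in>Ed. e \<notin> {x1,x2,x3} \<longrightarrow> u e = 0" and u1: "u x1 = 0"
  and c: "(\<Sum>e\<in>Ed. u e * cos (\<phi> e)) = 0" and s: "(\<Sum>e\<in>Ed. u e * sin (\<phi> e)) = 0"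
  and nz: "sin (\<phi> x3 - \<phi> x2) \<noteq> 0"
  shows "\<forall>e\<in>Ed. u e = 0"
proof -
  have "(\<Sum>e\<in>Ed. u e * cos (\<phi> e)) = (\<Sum>e\<in>{x1,x2,x3}. u e * cos (\<phi> e))"
    using fin xs z by (intro sum.mono_neutral_right) auto
  hence c2: "u x2 * cos (\<phi> x2) = - (u x3 * cos (\<phi> x3))" using c d u1 by simp
  have "(\<Sum>e\<in>Ed. u e * sin (\<phi> e)) = (\<Sum>e\<in>{x1,x2,x3}. u e * sin (\<phi> e))"
    using fin xs z by (intro sum.mono_neutral_right) auto
  hence s2: "u x2 * sin (\<phi> x2) = - (u x3 * sin (\<phi> x3))" using s d u1 by simp
  have c3: "u x3 * cos (\<phi> x3) = - (u x2 * cos (\<phi> x2))" using c2 by linarith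
  have s3: "u x3 * sin (\<phi> x3) = - (u x2 * sin (\<phi> x2))" using s2 by linarith
  have sd: "sin (\<phi> x3 - \<phi> x2) = sin (\<phi> x3) * cos (\<phi> x2) - cos (\<phi> x3) * sin (\<phi> x2)" by (simp add: sin_diff)
  have "u x2 * sin (\<phi> x3 - \<phi> x2) = sin (\<phi> x3) * (u x2 * cos (\<phi> x2)) - cos (\<phi> x3) * (u x2 * sin (\<phi> x2))"
    unfolding sd by (simp add: algebra_simps)
  also have "\<dots> = 0" unfolding c2 s2 by (simp add: algebra_simps)
  finally have 2: "u x2 = 0" using nz by simp
  have "u x3 * sin (\<phi> x3 - \<phi> x2) = cos (\<phi> x2) * (u x3 * sin (\<phi> x3)) - sin (\<phi> x2) * (u x3 * cos (\<phi> x3))"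
    unfolding sd by (simp add: algebra_simps)
  also have "\<dots> = 0" unfolding c3 s3 by (simp add: algebra_simps)
  finally have 3: "u x3 = 0" using nz by simp
  show ?thesis using z u1 2 3 by auto
qed



definition "ks_of cs F x1 = filter (\<lambda>e. e \<in> F \<union> {x1}) cs"
definition "jx cs F x1 = (THE k. k < length (ks_of cs F x1) \<and> ks_of cs F x1 ! k = x1)"
definition "mdt prec \<theta> rs cs F x1 = det (mat_delete (sigma_sub prec \<theta> rs cs (F \<union> {x1})) 0 (jx cs F x1))"
definition "sol Ed prec A \<theta> C = (\<exists>r. (\<forall>a\<in>A. dotE Ed (shat prec \<theta> a) r > 0) \<and> dotE Ed (shat prec \<theta> C) r > 0)"

lemma conv_lt:
  fixes s a b c d :: real
  assumes s: "0 \<le> s" "s \<le> 1" and ac: "a < c" and bd: "b < d"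
  shows "(1-s)*a + s*b < (1-s)*c + s*d"
proof (cases "s = 1")
  case True then show ?thesis using bd by simp
next
  case False
  hence "0 < 1 - s" using s by simp
  hence "(1-s)*a < (1-s)*c" using ac by simp
  moreover have "s*b \<le> s*d" using s bd by (simp add: mult_left_mono)
  ultimately show ?thesis by simp
qed

lemma md_mat: "mat_delete (mat nr nc f) 0 j = mat (nr-1) (nc-1) (\<lambda>(i',k'). f (Suc i', if k' < j then k' else Suc k'))"
  unfolding mat_delete_def by (rule cong_mat) auto

lemma cont_circ:
  fixes \<theta>f :: "real \<Rightarrow> 'e \<Rightarrow> real"
  assumes "\<And>e. continuous_on S (\<lambda>s. \<theta>f s e)"
  shows "continuous_on S (\<lambda>s. circ_val (\<theta>f s) e1 e2 e3 e)"
  unfolding circ_val_def sin_deg_def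
  by (cases "e = e1"; cases "e = e2"; cases "e = e3") (auto intro!: continuous_intros assms)

context
  fixes Ed :: "'e set" and prec A F x1 x2 x3 rs cs
  assumes fin: "finite Ed" and spo: "strict_partial_order_on Ed prec"
  and shp: "\<forall>a\<in>A. \<exists>e1 e2 e3. e1\<in>Ed \<and> e2\<in>Ed \<and> e3\<in>Ed \<and> prec e1 e2 \<and> prec e2 e3 \<and> (a = ({e1,e3},{e2}) \<or> a = ({e2},{e1,e3}))"
  and simpl: "simplicial_on Ed prec A F"
  and E: "Ed = F \<union> {x1,x2,x3}" "F \<inter> {x1,x2,x3} = {}"
  and x: "prec x1 x2" "prec x2 x3"
  and rows: "distinct rs" "set rs = A"
  and cols: "distinct cs" "set cs = Ed"
begin

abbreviation "ks \<equiv> ks_of cs F x1"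
abbreviation "j \<equiv> jx cs F x1"

lemma xEd: "x1 \<in> Ed" "x2 \<in> Ed" "x3 \<in> Ed" using E by auto

lemma xd: "x1 \<noteq> x2" "x2 \<noteq> x3" "x1 \<noteq> x3" "prec x1 x3"
proof -
  have irr: "\<And>e. e \<in> Ed \<Longrightarrow> \<not> prec e e" and tr: "prec x1 x2 \<Longrightarrow> prec x2 x3 \<Longrightarrow> prec x1 x3"
    using spo xEd unfolding strict_partial_order_on_def by blast+
  show "prec x1 x3" using tr x by blast
  thus "x1 \<noteq> x2" "x2 \<noteq> x3" "x1 \<noteq> x3" using irr x xEd by metis+
qed

lemma ks_set: "set ks = F \<union> {x1}" using cols E unfolding ks_of_def by auto
lemma ks_dist: "distinct ks" using cols unfolding ks_of_def by simp
lemma finF: "finite F" using fin E by auto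
lemma x1F: "x1 \<notin> F" using E by auto
lemma len_ks: "length ks = Suc (card F)"
  using distinct_card[OF ks_dist] ks_set finF x1F by simp

lemma jprop: "j < length ks" "ks ! j = x1"
proof -
  have "\<exists>!k. k < length ks \<and> ks ! k = x1" using distinct_Ex1[OF ks_dist] ks_set by simp
  hence "j < length ks \<and> ks ! j = x1" unfolding jx_def by (rule theI')
  thus "j < length ks" "ks ! j = x1" by auto
qed

lemma ks_F: "k < length ks \<Longrightarrow> k \<noteq> j \<Longrightarrow> ks ! k \<in> F"
proof -
  assume k: "k < length ks" "k \<noteq> j"
  have "ks ! k \<noteq> x1" using k jprop ks_dist by (metis nth_eq_iff_index_eq)
  moreover have "ks ! k \<in> F \<union> {x1}" using k ks_set nth_mem by metis
  ultimately show ?thesis by simp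
qed

lemma F_ks: "f \<in> F \<Longrightarrow> \<exists>k. k < length ks \<and> k \<noteq> j \<and> ks ! k = f"
proof -
  assume f: "f \<in> F"
  then obtain k where "k < length ks" "ks ! k = f" using ks_set by (metis UnI1 in_set_conv_nth)
  moreover have "k \<noteq> j" using calculation jprop f x1F by auto
  ultimately show ?thesis by blast
qed

lemma ks_Ed: "k < length ks \<Longrightarrow> ks ! k \<in> Ed" using ks_set E nth_mem by fastforce

lemma sigma_eq: "sigma_sub prec \<theta> rs cs (F \<union> {x1}) = mat (length rs) (length ks) (\<lambda>(i,k). shat prec \<theta> (rs!i) (ks!k))"
  unfolding sigma_sub_def ks_of_def Let_def by simp

lemma A_shat_kern:
  assumes a: "a \<in> A"
  shows "(\<Sum>e\<in>Ed. shat prec \<theta> a e * cos (\<theta> e * pi / 180)) = 0"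
    and "(\<Sum>e\<in>Ed. shat prec \<theta> a e * sin (\<theta> e * pi / 180)) = 0"
    and "\<And>e. e \<notin> Ed \<Longrightarrow> shat prec \<theta> a e = 0"
proof -
  obtain e1 e2 e3 where es: "e1\<in>Ed" "e2\<in>Ed" "e3\<in>Ed" and p: "prec e1 e2" "prec e2 e3"
    and af: "a = ({e1,e3},{e2}) \<or> a = ({e2},{e1,e3})" using shp a by blast
  have irr: "\<And>e. e \<in> Ed \<Longrightarrow> \<not> prec e e" and tr: "prec e1 e2 \<Longrightarrow> prec e2 e3 \<Longrightarrow> prec e1 e3"
    using spo es unfolding strict_partial_order_on_def by blast+
  have d: "e1 \<noteq> e2" "e2 \<noteq> e3" "e1 \<noteq> e3" using irr tr p es by metis+
  note K = circ_kern[OF fin es d, of \<theta>]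
  note S = shat_circ[OF spo es p, of \<theta>]
  from af show "(\<Sum>e\<in>Ed. shat prec \<theta> a e * cos (\<theta> e * pi / 180)) = 0"
    using K S by (auto simp: sum_negf)
  from af show "(\<Sum>e\<in>Ed. shat prec \<theta> a e * sin (\<theta> e * pi / 180)) = 0"
    using K S by (auto simp: sum_negf)
  fix e assume "e \<notin> Ed"
  with af show "shat prec \<theta> a e = 0" using S es by (auto simp: circ_val_def)
qed

lemma per_theta:
  assumes resp: "respects_po Ed prec \<theta>"
  and kap: "\<kappa> = 1 \<or> \<kappa> = -1" and Ck: "shat prec \<theta> C = (\<lambda>e. \<kappa> * circ_val \<theta> x1 x2 x3 e)"
  shows "mdt prec \<theta> rs cs F x1 \<noteq> 0 \<and> (sol Ed prec A \<theta> C \<longleftrightarrow>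
     sgn (det (sigma_sub prec \<theta> rs cs (F \<union> {x1}))) = \<kappa> * ((-1)^j * sgn (mdt prec \<theta> rs cs F x1)))"
proof -
  let ?S = "shat prec \<theta>"
  let ?cv = "circ_val \<theta> x1 x2 x3"
  from simpl resp have "is_simplex A F (\<lambda>a e. ?S a e)" unfolding simplicial_on_def by blast
  then obtain lam where finA: "finite A" and cardA: "card A = card F + 1"
    and lpos: "\<forall>a\<in>A. lam a > 0" and ldep: "\<forall>k\<in>F. (\<Sum>a\<in>A. lam a * ?S a k) = 0"
    and luniq: "\<forall>\<mu>. (\<forall>k\<in>F. (\<Sum>a\<in>A. \<mu> a * ?S a k) = 0) \<longrightarrow> (\<exists>t. \<forall>a\<in>A. \<mu> a = t * lam a)"
    unfolding is_simplex_def by blast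
  define n where "n = length rs"
  have nA: "n = card A" using distinct_card[OF rows(1)] rows(2) n_def by simp
  have nks: "length ks = n" using len_ks nA cardA by simp
  define m where "m = card F"
  have m: "n = Suc m" using nks len_ks m_def by simp
  define M where "M = sigma_sub prec \<theta> rs cs (F \<union> {x1})"
  have Mdef: "M = mat n n (\<lambda>(i,k). ?S (rs!i) (ks!k))" unfolding M_def sigma_eq n_def nks[unfolded n_def] ..
  have Mc: "M \<in> carrier_mat (Suc m) (Suc m)" unfolding Mdef m by simp
  have Mij: "\<And>i k. i < n \<Longrightarrow> k < n \<Longrightarrow> M $$ (i,k) = ?S (rs!i) (ks!k)" unfolding Mdef by simp
  have rsA: "\<And>i. i < n \<Longrightarrow> rs!i \<in> A" using rows(2) n_def nth_mem by blast
  have jn: "j < Suc m" using jprop(1) nks m by simp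
  define lam' where "lam' i = lam (rs!i)" for i
  have sumA: "\<And>g. (\<Sum>a\<in>A. g a) = (\<Sum>i<n. g (rs!i))" using sum_list_idx[OF rows(1)] rows(2) n_def by metis
  have L1: "\<forall>i<Suc m. lam' i > 0" using lpos rsA m unfolding lam'_def by auto
  have L2: "\<forall>k<Suc m. k \<noteq> j \<longrightarrow> (\<Sum>i<Suc m. lam' i * M$$(i,k)) = 0"
  proof (intro allI impI)
    fix k assume k: "k < Suc m" "k \<noteq> j"
    have "(\<Sum>i<Suc m. lam' i * M$$(i,k)) = (\<Sum>i<n. lam (rs!i) * ?S (rs!i) (ks!k))"
      using k m Mij unfolding lam'_def by (intro sum.cong) auto
    also have "\<dots> = (\<Sum>a\<in>A. lam a * ?S a (ks!k))" by (rule sumA[symmetric])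
    also have "\<dots> = 0" using ldep ks_F[of k] k nks m by simp
    finally show "(\<Sum>i<Suc m. lam' i * M$$(i,k)) = 0" .
  qed
  have L3: "\<forall>\<mu>. (\<forall>k<Suc m. k\<noteq>j \<longrightarrow> (\<Sum>i<Suc m. \<mu> i * M$$(i,k)) = 0) \<longrightarrow> (\<exists>c. \<forall>i<Suc m. \<mu> i = c * lam' i)"
  proof (intro allI impI)
    fix \<mu> assume h\<mu>: "\<forall>k<Suc m. k\<noteq>j \<longrightarrow> (\<Sum>i<Suc m. \<mu> i * M$$(i,k)) = 0"
    define \<mu>A where "\<mu>A a = (\<Sum>i<n. if rs!i = a then \<mu> i else 0)" for a
    have \<mu>A: "\<And>i. i < n \<Longrightarrow> \<mu>A (rs!i) = \<mu> i" unfolding \<mu>A_def n_def using sum_ind[OF rows(1)] by blast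
    have "\<forall>f\<in>F. (\<Sum>a\<in>A. \<mu>A a * ?S a f) = 0"
    proof
      fix f assume f: "f \<in> F"
      obtain k where k: "k < length ks" "k \<noteq> j" "ks ! k = f" using F_ks[OF f] by blast
      have "(\<Sum>a\<in>A. \<mu>A a * ?S a f) = (\<Sum>i<n. \<mu>A (rs!i) * ?S (rs!i) f)" by (rule sumA)
      also have "\<dots> = (\<Sum>i<Suc m. \<mu> i * M$$(i,k))"
        using \<mu>A Mij k nks m by (intro sum.cong) auto
      also have "\<dots> = 0" using h\<mu> k nks m by simp
      finally show "(\<Sum>a\<in>A. \<mu>A a * ?S a f) = 0" .
    qed
    then obtain t where t: "\<forall>a\<in>A. \<mu>A a = t * lam a" using luniq by blast
    show "\<exists>c. \<forall>i<Suc m. \<mu> i = c * lam' i"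
      using t \<mu>A rsA m unfolding lam'_def by (metis)
  qed
  note cA = core_a[OF Mc jn L1 L2 L3] and cB = core_b[OF Mc jn L1 L2 L3] and cC = core_c[OF Mc jn L1 L2 L3]
  define w where "w e = (\<Sum>a\<in>A. lam a * ?S a e)" for e
  have Wv: "(\<Sum>i<Suc m. lam' i * M$$(i,j)) = w x1"
  proof -
    have "(\<Sum>i<Suc m. lam' i * M$$(i,j)) = (\<Sum>i<n. lam (rs!i) * ?S (rs!i) x1)"
      using jn m Mij jprop(2) unfolding lam'_def by (intro sum.cong) auto
    also have "\<dots> = w x1" unfolding w_def by (rule sumA[symmetric])
    finally show ?thesis .
  qed
  have wF: "\<forall>f\<in>F. w f = 0" using ldep unfolding w_def by simp
  have wk: "(\<Sum>e\<in>Ed. w e * g e) = (\<Sum>a\<in>A. lam a * (\<Sum>e\<in>Ed. ?S a e * g e))" for g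
    unfolding w_def by (simp add: sum_distrib_left sum_distrib_right mult.assoc sum.swap[of _ Ed])
  have wcos: "(\<Sum>e\<in>Ed. w e * cos (\<theta> e * pi / 180)) = 0" unfolding wk using A_shat_kern(1) by simp
  have wsin: "(\<Sum>e\<in>Ed. w e * sin (\<theta> e * pi / 180)) = 0" unfolding wk using A_shat_kern(2) by simp
  define c1 where "c1 = sin_deg (\<theta> x3 - \<theta> x2)"
  have cvx1: "?cv x1 = c1" unfolding circ_val_def c1_def by simp
  have sdeg: "sin_deg (\<theta> x3 - \<theta> x2) = sin (\<theta> x3 * pi / 180 - \<theta> x2 * pi / 180)"
    unfolding sin_deg_def by (simp add: left_diff_distrib diff_divide_distrib)
  have c1pos: "c1 > 0"
  proof -
    have r: "0 < \<theta> x2" "\<theta> x3 < 180" "\<theta> x2 < \<theta> x3" using resp xEd x unfolding respects_po_def by auto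
    have "0 < (\<theta> x3 - \<theta> x2) * pi / 180" using r by simp
    moreover have "(\<theta> x3 - \<theta> x2) * pi / 180 < pi" using r by (simp add: divide_less_eq)
    ultimately show ?thesis unfolding c1_def sin_deg_def by (rule sin_gt_zero)
  qed
  have cvF: "\<And>e. e \<notin> {x1,x2,x3} \<Longrightarrow> ?cv e = 0" unfolding circ_val_def by auto
  note cvK = circ_kern[OF fin xEd xd(1-3), of \<theta>]
  define u where "u e = w e - (w x1 / c1) * ?cv e" for e
  have ug: "(\<Sum>e\<in>Ed. u e * g e) = (\<Sum>e\<in>Ed. w e * g e) - (w x1 / c1) * (\<Sum>e\<in>Ed. ?cv e * g e)" for g
    unfolding u_def by (simp add: left_diff_distrib sum_subtractf sum_distrib_left mult.assoc)
  have u0: "\<forall>e\<in>Ed. u e = 0"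
  proof (rule three_pts[OF fin xEd xd(1-3), where \<phi> = "\<lambda>e. \<theta> e * pi / 180"])
    show "\<forall>e\<in>Ed. e \<notin> {x1,x2,x3} \<longrightarrow> u e = 0" using wF cvF E unfolding u_def by auto
    show "u x1 = 0" unfolding u_def cvx1 using c1pos by simp
    show "(\<Sum>e\<in>Ed. u e * cos (\<theta> e * pi / 180)) = 0"
      unfolding ug using wcos cvK(1) by simp
    show "(\<Sum>e\<in>Ed. u e * sin (\<theta> e * pi / 180)) = 0"
      unfolding ug using wsin cvK(2) by simp
    show "sin (\<theta> x3 * pi / 180 - \<theta> x2 * pi / 180) \<noteq> 0" using c1pos sdeg c1_def by simp
  qed
  have Wx: "\<forall>e\<in>Ed. w e = (w x1 / c1) * ?cv e" using u0 unfolding u_def by auto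
  have swp: "(\<Sum>a\<in>A. lam a * dotE Ed (?S a) r) = dotE Ed w r" for r
    unfolding dotE_def w_def by (simp add: sum_distrib_left sum_distrib_right mult.assoc sum.swap[of _ Ed])
  have dC: "dotE Ed (?S C) r = \<kappa> * dotE Ed ?cv r" for r
    unfolding dotE_def Ck by (simp add: sum_distrib_left mult.assoc)
  have Ane: "A \<noteq> {}" using cardA finA by auto
  have SOL: "sol Ed prec A \<theta> C \<longleftrightarrow> \<kappa> * w x1 > 0"
  proof
    assume "sol Ed prec A \<theta> C"
    then obtain r where hpos: "\<forall>a\<in>A. dotE Ed (?S a) r > 0" and hC: "dotE Ed (?S C) r > 0"
      unfolding sol_def by blast
    have "(\<Sum>a\<in>A. lam a * dotE Ed (?S a) r) > 0"
      using finA Ane hpos lpos by (intro sum_pos) auto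
    hence p0: "dotE Ed w r > 0" using swp[of r] by simp
    have "dotE Ed w r = (w x1 / c1) * dotE Ed ?cv r" unfolding dotE_def sum_distrib_left
      using Wx by (intro sum.cong) auto
    define q where "q = w x1 / c1"
    have p1: "q * dotE Ed ?cv r > 0" using p0 \<open>dotE Ed w r = _\<close> unfolding q_def by simp
    have p2: "\<kappa> * dotE Ed ?cv r > 0" using hC dC by simp
    show "\<kappa> * w x1 > 0"
    proof (cases "\<kappa> = 1")
      case True
      then have "dotE Ed ?cv r > 0" using p2 by simp
      then have "q > 0" using p1 by (simp add: zero_less_mult_iff)
      then show ?thesis using True c1pos unfolding q_def by (simp add: zero_less_divide_iff)
    next
      case False
      then have k: "\<kappa> = -1" using kap by simp
      then have "dotE Ed ?cv r < 0" using p2 by simp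
      then have "q < 0" using p1 by (simp add: zero_less_mult_iff)
      then show ?thesis using k c1pos unfolding q_def by (simp add: divide_less_0_iff)
    qed
  next
    assume kw: "\<kappa> * w x1 > 0"
    hence "(\<Sum>i<Suc m. lam' i * M$$(i,j)) \<noteq> 0" using Wv by auto
    then obtain v where v: "\<forall>i<Suc m. (\<Sum>k<Suc m. M$$(i,k) * v k) = 1" using cC by blast
    define r where "r e = (\<Sum>k<n. if ks!k = e then v k else 0)" for e
    have dotr: "dotE Ed g r = (\<Sum>k<n. g (ks!k) * v k)" for g
    proof -
      have "dotE Ed g r = (\<Sum>k<n. \<Sum>e\<in>Ed. if ks!k = e then g e * v k else 0)"
        unfolding dotE_def r_def by (simp add: sum_distrib_left sum.swap[of _ Ed] if_distrib cong: if_cong)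
      also have "\<dots> = (\<Sum>k<n. g (ks!k) * v k)"
        using ks_Ed nks fin by (intro sum.cong) (auto simp: sum.delta)
      finally show ?thesis .
    qed
    have ka: "\<forall>a\<in>A. dotE Ed (?S a) r > 0"
    proof
      fix a assume "a \<in> A"
      then obtain i where i: "i < n" "rs!i = a" using rows(2) n_def by (metis in_set_conv_nth)
      have "dotE Ed (?S a) r = (\<Sum>k<Suc m. M$$(i,k) * v k)" unfolding dotr using i Mij m
        by (intro sum.cong) auto
      also have "\<dots> = 1" using v i m by simp
      finally show "dotE Ed (?S a) r > 0" by simp
    qed
    have offj: "\<And>g. (\<forall>f\<in>F. g f = 0) \<Longrightarrow> (\<Sum>k<n. g (ks!k) * v k) = g x1 * v j"
    proof -
      fix g :: "'e \<Rightarrow> real" assume g: "\<forall>f\<in>F. g f = 0"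
      have "(\<Sum>k<n. g (ks!k) * v k) = (\<Sum>k<n. if k = j then g x1 * v j else 0)"
        using g ks_F jprop nks by (intro sum.cong) auto
      also have "\<dots> = g x1 * v j" using jprop nks by simp
      finally show "(\<Sum>k<n. g (ks!k) * v k) = g x1 * v j" .
    qed
    have "(\<Sum>a\<in>A. lam a * dotE Ed (?S a) r) > 0"
      using finA Ane ka lpos by (intro sum_pos) auto
    hence "dotE Ed w r > 0" using swp[of r] by simp
    hence wv: "w x1 * v j > 0" unfolding dotr using offj[OF wF] by simp
    have cvF': "\<forall>f\<in>F. ?cv f = 0" using cvF E by (metis IntI empty_iff insertCI)
    have "dotE Ed (?S C) r = \<kappa> * (c1 * v j)" using dC[of r] dotr[of ?cv] offj[OF cvF'] cvx1 by simp
    moreover have "\<kappa> * (c1 * v j) > 0"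
    proof (cases "\<kappa> = 1")
      case True
      then have "w x1 > 0" using kw by simp
      then have "v j > 0" using wv by (simp add: zero_less_mult_iff)
      then show ?thesis using True c1pos by simp
    next
      case False
      then have k: "\<kappa> = -1" using kap by simp
      then have "w x1 < 0" using kw by simp
      then have "v j < 0" using wv by (simp add: zero_less_mult_iff)
      then show ?thesis using k c1pos by (simp add: mult_pos_neg)
    qed
    ultimately show "sol Ed prec A \<theta> C" using ka unfolding sol_def by auto
  qed
  have mdM: "mdt prec \<theta> rs cs F x1 = det (mat_delete M 0 j)" unfolding mdt_def M_def jx_def ..
  define md where "md = det (mat_delete M 0 j)"
  have md0: "md \<noteq> 0" using cA md_def by simp
  have dM: "det M = (-1)^j * md * w x1 / lam' 0" using cB Wv unfolding cofactor_def md_def by simp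
  have l0: "lam' 0 > 0" using L1 by simp
  have sgnpow: "sgn ((-1::real)^j) = (-1)^j" by (cases "even j") auto
  have sdM: "sgn (det M) = (-1)^j * sgn md * sgn (w x1)" unfolding dM using l0
    by (simp add: sgn_mult sgn_divide sgnpow)
  have pm: "(-1::real)^j = 1 \<or> (-1::real)^j = -1" by (cases "even j") auto
  have smd: "sgn md = 1 \<or> sgn md = -1" using md0 by (auto simp: sgn_if)
  have "(\<kappa> * w x1 > 0) \<longleftrightarrow> sgn (det M) = \<kappa> * ((-1)^j * sgn md)"
    unfolding sdM using kap pm smd
    by (cases "w x1 > 0"; cases "w x1 < 0") (auto simp: sgn_if zero_less_mult_iff)
  thus ?thesis using SOL md0 unfolding mdM md_def M_def by simp
qed

lemma shat_cont:
  fixes \<theta>f :: "real \<Rightarrow> 'e \<Rightarrow> real"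
  assumes a: "a \<in> A" and c: "\<And>e. continuous_on S (\<lambda>s. \<theta>f s e)"
  shows "continuous_on S (\<lambda>s. shat prec (\<theta>f s) a e)"
proof -
  obtain e1 e2 e3 where es: "e1\<in>Ed" "e2\<in>Ed" "e3\<in>Ed" and p: "prec e1 e2" "prec e2 e3"
    and af: "a = ({e1,e3},{e2}) \<or> a = ({e2},{e1,e3})" using shp a by blast
  note S = shat_circ[OF spo es p]
  from af show ?thesis
  proof
    assume "a = ({e1,e3},{e2})"
    thus ?thesis using S(1) cont_circ[of S \<theta>f, OF c] by simp
  next
    assume "a = ({e2},{e1,e3})"
    thus ?thesis using S(2) continuous_on_minus[OF cont_circ[of S \<theta>f, OF c]] by simp
  qed
qed

lemma C0_eq: "shat prec \<theta> ({x1,x3},{x2}) = (\<lambda>e. 1 * circ_val \<theta> x1 x2 x3 e)"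
  using shat_circ(1)[OF spo xEd x] by simp
lemma C1_eq: "shat prec \<theta> ({x2},{x1,x3}) = (\<lambda>e. (-1) * circ_val \<theta> x1 x2 x3 e)"
  using shat_circ(2)[OF spo xEd x] by simp

lemma md_nz: "respects_po Ed prec \<theta> \<Longrightarrow> mdt prec \<theta> rs cs F x1 \<noteq> 0"
  using per_theta[OF _ _ C0_eq] by blast

lemma md_const:
  assumes r0: "respects_po Ed prec \<theta>0" and r1: "respects_po Ed prec \<theta>1"
  shows "sgn (mdt prec \<theta>0 rs cs F x1) = sgn (mdt prec \<theta>1 rs cs F x1)"
proof -
  define p where "p s = (\<lambda>e. (1-s) * \<theta>0 e + s * \<theta>1 e)" for s
  have rp: "respects_po Ed prec (p s)" if s: "0 \<le> s" "s \<le> 1" for s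
    unfolding respects_po_def
  proof (intro conjI ballI impI)
    fix e assume e: "e \<in> Ed"
    have "(1-s)*0 + s*0 < p s e" unfolding p_def
      using conv_lt[OF s] r0 r1 e unfolding respects_po_def by blast
    thus "0 < p s e" by simp
    have "p s e < (1-s)*180 + s*180" unfolding p_def
      using conv_lt[OF s] r0 r1 e unfolding respects_po_def by blast
    thus "p s e < 180" by simp
  next
    fix e f assume "e \<in> Ed" "f \<in> Ed" "prec e f"
    thus "p s e < p s f" unfolding p_def
      using conv_lt[OF s] r0 r1 unfolding respects_po_def by blast
  qed
  from simpl r0 have "is_simplex A F (\<lambda>a e. shat prec \<theta>0 a e)" unfolding simplicial_on_def by blast
  hence cardA: "card A = card F + 1" unfolding is_simplex_def by blast
  define n where "n = length rs"
  have nks: "length ks = n" using len_ks distinct_card[OF rows(1)] rows(2) cardA n_def by simp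
  define h where "h s = mdt prec (p s) rs cs F x1" for s
  have hform: "h s = det (mat (n-1) (n-1) (\<lambda>(i',k'). shat prec (p s) (rs ! Suc i') (ks ! (if k' < j then k' else Suc k'))))" for s
    unfolding h_def mdt_def sigma_eq md_mat n_def nks[unfolded n_def] by simp
  have pc: "continuous_on UNIV (\<lambda>s. p s e)" for e unfolding p_def by (intro continuous_intros)
  have hc: "continuous_on {0..1} h"
    unfolding hform
  proof (rule continuous_det)
    fix i k assume "i < n - 1" "k < n - 1"
    hence "rs ! Suc i \<in> A" using rows n_def by (metis less_diff_conv nth_mem Suc_eq_plus1)
    thus "continuous_on {0..1} (\<lambda>s. case (i, k) of (i', k') \<Rightarrow> shat prec (p s) (rs ! Suc i') (ks ! (if k' < j then k' else Suc k')))"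
      using shat_cont[of _ "{0..1}" p] pc continuous_on_subset by (simp, blast)
  qed
  have hnz: "h s \<noteq> 0" if "s \<in> {0..1}" for s unfolding h_def using md_nz rp that by simp
  have h0: "h 0 = mdt prec \<theta>0 rs cs F x1" unfolding h_def p_def by simp
  have h1: "h 1 = mdt prec \<theta>1 rs cs F x1" unfolding h_def p_def by simp
  have "sgn (h 0) = sgn (h 1)"
  proof (rule ccontr)
    assume ne: "sgn (h 0) \<noteq> sgn (h 1)"
    have nz: "h 0 \<noteq> 0" "h 1 \<noteq> 0" using hnz by auto
    have "\<exists>s\<ge>0. s \<le> 1 \<and> h s = 0"
    proof (cases "h 0 < 0")
      case True
      hence "h 1 > 0" using ne nz by (auto simp: sgn_if split: if_splits)
      thus ?thesis using True hc by (intro IVT') auto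
    next
      case False
      hence "h 0 > 0" "h 1 < 0" using ne nz by (auto simp: sgn_if split: if_splits)
      thus ?thesis using hc by (intro IVT2') auto
    qed
    thus False using hnz by auto
  qed
  thus ?thesis using h0 h1 by simp
qed

end


theorem theoremt:
  fixes V :: "'v set" and Ed :: "('v \<times> 'v) set"
    and prec :: "('v \<times> 'v) \<Rightarrow> ('v \<times> 'v) \<Rightarrow> bool"
    and A :: "('v \<times> 'v) sset set"
    and F :: "('v \<times> 'v) set" and x1 x2 x3 :: "'v \<times> 'v"
    and rs :: "('v \<times> 'v) sset list" and cs :: "('v \<times> 'v) list"
  assumes T: "twisted_graph V Ed prec A"
    and wd: "\<forall>a\<in>A. \<forall>e\<in>supp a. \<forall>f\<in>supp a. e \<noteq> f \<longrightarrow> prec e f \<or> prec f e"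
    and simp: "simplicial_on Ed prec A F"
    and E: "Ed = F \<union> {x1, x2, x3}" "F \<inter> {x1, x2, x3} = {}"
    and x: "prec x1 x2" "prec x2 x3"
    and rows: "distinct rs" "set rs = A"
    and cols: "distinct cs" "set cs = Ed"
  shows "\<exists>\<sigma>::real. \<sigma> \<in> {1, -1} \<and>
     (\<forall>C \<in> {({x1, x3}, {x2}), ({x2}, {x1, x3})}.
        (\<forall>\<theta>. respects_po Ed prec \<theta> \<longrightarrow>
          ((\<exists>r. (\<forall>a\<in>A. dotE Ed (shat prec \<theta> a) r > 0) \<and> dotE Ed (shat prec \<theta> C) r > 0)
           \<longleftrightarrow> sgn (det (sigma_sub prec \<theta> rs cs (F \<union> {x1})))
                 = (if C = ({x1, x3}, {x2}) then \<sigma> else - \<sigma>))))"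
proof -
  have dg: "digraph V Ed" and spo: "strict_partial_order_on Ed prec" and Apo: "A \<subseteq> circuits_po Ed prec"
    using T unfolding twisted_graph_def by blast+
  have fin: "finite Ed" using dg unfolding digraph_def by (meson finite_SigmaI finite_subset)
  have shp: "\<forall>a\<in>A. \<exists>e1 e2 e3. e1\<in>Ed \<and> e2\<in>Ed \<and> e3\<in>Ed \<and> prec e1 e2 \<and> prec e2 e3 \<and> (a = ({e1,e3},{e2}) \<or> a = ({e2},{e1,e3}))"
  proof
    fix a assume a: "a \<in> A"
    show "\<exists>e1 e2 e3. e1\<in>Ed \<and> e2\<in>Ed \<and> e3\<in>Ed \<and> prec e1 e2 \<and> prec e2 e3 \<and> (a = ({e1,e3},{e2}) \<or> a = ({e2},{e1,e3}))"
      using shape[OF fin spo, of a] Apo a wd by blast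
  qed
  note ctx = fin spo shp simp E(1) E(2) x(1) x(2) rows(1) rows(2) cols(1) cols(2)
  note PT = per_theta[OF ctx] and MC = md_const[OF ctx] and MZ = md_nz[OF ctx]
    and C0 = C0_eq[OF ctx] and C1 = C1_eq[OF ctx] and XD = xd[OF ctx]
  let ?R = "\<lambda>\<theta>. respects_po Ed prec \<theta>"
  let ?j = "jx cs F x1"
  define \<sigma> where "\<sigma> = (if \<exists>\<theta>. ?R \<theta> then (-1)^?j * sgn (mdt prec (SOME \<theta>. ?R \<theta>) rs cs F x1) else (1::real))"
  have pm: "(-1::real)^?j = 1 \<or> (-1::real)^?j = -1" by (cases "even ?j") auto
  show ?thesis
  proof (rule exI[of _ \<sigma>], intro conjI ballI allI impI)
    show "\<sigma> \<in> {1, -1}"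
    proof (cases "\<exists>\<theta>. ?R \<theta>")
      case True
      hence "?R (SOME \<theta>. ?R \<theta>)" by (rule someI_ex)
      hence "mdt prec (SOME \<theta>. ?R \<theta>) rs cs F x1 \<noteq> 0" by (rule MZ)
      thus ?thesis using True pm unfolding \<sigma>_def by (auto simp: sgn_if)
    qed (simp add: \<sigma>_def)
  next
    fix C \<theta> assume C: "C \<in> {({x1, x3}, {x2}), ({x2}, {x1, x3})}" and r: "?R \<theta>"
    have ex: "\<exists>\<theta>. ?R \<theta>" using r by blast
    have "sgn (mdt prec (SOME \<theta>. ?R \<theta>) rs cs F x1) = sgn (mdt prec \<theta> rs cs F x1)"
      by (rule MC[OF someI_ex[OF ex] r])
    hence se: "\<sigma> = (-1)^?j * sgn (mdt prec \<theta> rs cs F x1)" unfolding \<sigma>_def using ex by simp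
    have neq: "({x2}, {x1, x3}) \<noteq> ({x1, x3}, {x2})" using XD(1) by (auto simp: doubleton_eq_iff)
    from C show "(\<exists>r. (\<forall>a\<in>A. dotE Ed (shat prec \<theta> a) r > 0) \<and> dotE Ed (shat prec \<theta> C) r > 0)
           \<longleftrightarrow> sgn (det (sigma_sub prec \<theta> rs cs (F \<union> {x1})))
                 = (if C = ({x1, x3}, {x2}) then \<sigma> else - \<sigma>)"
    proof
      assume c: "C = ({x1, x3}, {x2})"
      show ?thesis using PT[OF r _ C0] unfolding c sol_def se by simp
    next
      assume "C \<in> {({x2}, {x1, x3})}"
      hence c: "C = ({x2}, {x1, x3})" by simp
      show ?thesis using PT[OF r _ C1] XD(1) unfolding c sol_def se by simp
    qed
  qed
qed


end
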